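(* Let $h\in R$. Then for every $i\ge1$, the binary representation of $h$ does not contain the string $1(10)^i0$ as a contiguous substring.
   Context: Stern's sequence $(a(n))_{n\ge0}$: $a(0)=0$, $a(1)=1$, $a(2n)=a(n)$, $a(2n+1)=a(n)+a(n+1)$; $s(n)=a(n+1)$ for $n\ge0$. $R$ is the set of record-setters of $s$, i.e. indices $v\ge0$ with $s(i)<s(v)$ for all $i<v$. The binary representation of a positive integer has no leading zeros; $0$ is represented by the string $0$. $x^i$ denotes $i$-fold concatenation of the string $x$. *)

theory Defs
  imports Main "HOL-Library.Sublist"
begin

function stern :: "nat \<Rightarrow> nat" where
  "stern 0 = 0"
| "stern (Suc 0) = 1"
| "n > 0 \<Longrightarrow> stern (2 * n) = stern n"
| "n > 0 \<Longrightarrow> stern (2 * n + 1) = stern n + stern (n + 1)"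
proof -
  fix P :: bool and x :: nat
  assume a: "x = 0 \<Longrightarrow> P" "x = Suc 0 \<Longrightarrow> P"
    "\<And>n. 0 < n \<Longrightarrow> x = 2 * n \<Longrightarrow> P"
    "\<And>n. 0 < n \<Longrightarrow> x = 2 * n + 1 \<Longrightarrow> P"
  show P
  proof (cases "x \<le> 1")
    case True then show ?thesis using a(1,2) by (cases x) auto
  next
    case False
    show ?thesis
    proof (cases "even x")
      case True then show ?thesis using a(3)[of "x div 2"] False by auto
    next
      case f: False show ?thesis proof (rule a(4)[of "x div 2"])
        show "0 < x div 2" using False by simp
        show "x = 2 * (x div 2) + 1" using f by presburger
      qed
    qed
  qed
qed (auto, presburger)
termination
  by (relation "measure id") auto

definition s_seq :: "nat \<Rightarrow> nat" where
  "s_seq n = stern (n + 1)"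

definition R :: "nat set" where
  "R = {v. \<forall>i<v. s_seq i < s_seq v}"

text \<open>Binary representation, most significant bit first, True = 1, False = 0;
  no leading zeros, and 0 is represented by the string "0".\<close>
fun bin_aux :: "nat \<Rightarrow> bool list" where
  "bin_aux n = (if n = 0 then [] else bin_aux (n div 2) @ [odd n])"

definition bin :: "nat \<Rightarrow> bool list" where
  "bin n = (if n = 0 then [False] else bin_aux n)"

definition pow_str :: "'a list \<Rightarrow> nat \<Rightarrow> 'a list" where
  "pow_str x i = concat (replicate i x)"

end

theory Submission
  imports Defs
begin

fun stp :: "bool \<Rightarrow> nat \<times> nat \<Rightarrow> nat \<times> nat" where
  "stp False (a,b) = (a, a+b)"
| "stp True (a,b) = (a+b, b)"

definition g :: "nat \<Rightarrow> bool \<Rightarrow> nat" where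
  "g n b = 2*n + (if b then 1 else 0)"

definition val :: "bool list \<Rightarrow> nat" where
  "val w = foldl g 0 w"

lemma foldl_g: "foldl g n w = n * 2^length w + foldl g 0 w"
proof (induction w arbitrary: n)
  case Nil then show ?case by simp
next
  case (Cons b w)
  have "foldl g n (b # w) = g n b * 2^length w + foldl g 0 w" using Cons.IH[of "g n b"] by simp
  moreover have "foldl g 0 (b # w) = g 0 b * 2^length w + foldl g 0 w" using Cons.IH[of "g 0 b"] by simp
  moreover have "g n b = 2*n + g 0 b" by (simp add: g_def)
  ultimately show ?case by (simp add: distrib_right)
qed

lemma val_append: "val (xs @ ys) = val xs * 2^length ys + val ys"
  unfolding val_def by (simp add: foldl_g[of "foldl g 0 xs"])

lemma val_lt: "val w < 2^length w"
proof (induction w)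
  case Nil then show ?case by (simp add: val_def)
next
  case (Cons b w)
  have "val (b # w) = (if b then 1 else 0) * 2^length w + val w"
    using val_append[of "[b]" w] by (simp add: val_def g_def)
  then show ?case using Cons.IH by simp
qed

lemma stern_even: "stern (2*n) = stern n"
  by (cases "n = 0") auto

lemma stern_odd: "stern (2*n+1) = stern n + stern (n+1)"
proof (cases "n = 0")
  case True then show ?thesis by simp
next
  case False then show ?thesis using stern.simps(4)[of n] by simp
qed

lemma stern_fold:
  "fold stp w (stern n, stern (n+1)) = (stern (foldl g n w), stern (foldl g n w + 1))"
proof (induction w arbitrary: n)
  case Nil then show ?case by simp
next
  case (Cons b w)
  show ?case
  proof (cases b)
    case True
    have "stp b (stern n, stern (n+1)) = (stern (g n b), stern (g n b + 1))"
      using True stern_odd[of n] stern_even[of "n+1"] by (simp add: g_def)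
    then show ?thesis using Cons.IH[of "g n b"] by simp
  next
    case False
    have "stp b (stern n, stern (n+1)) = (stern (g n b), stern (g n b + 1))"
      using False stern_odd[of n] stern_even[of n] by (simp add: g_def)
    then show ?thesis using Cons.IH[of "g n b"] by simp
  qed
qed

lemma stern_val: "fold stp w (0,1) = (stern (val w), stern (val w + 1))"
  using stern_fold[of w 0] by (simp add: val_def)

declare bin_aux.simps[simp del]

lemma val_bin_aux: "val (bin_aux n) = n"
proof (induction n rule: bin_aux.induct)
  case (1 n)
  show ?case
  proof (cases "n = 0")
    case True then show ?thesis by (subst bin_aux.simps) (simp add: val_def)
  next
    case False
    then have "bin_aux n = bin_aux (n div 2) @ [odd n]" by (subst bin_aux.simps) simp
    then show ?thesis using 1 False by (simp add: val_append val_def g_def)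
  qed
qed

lemma val_bin: "val (bin h) = h"
  by (cases "h = 0") (simp_all add: bin_def val_bin_aux, simp add: val_def g_def)

lemma val_simps: "val [True,False] = 2" "val [True] = 1" "val [False] = 0"
  by (simp_all add: val_def g_def)

lemma val_Cons: "val (b # w) = (if b then 1 else 0) * 2^length w + val w"
  using val_append[of "[b]" w] by (cases b) (simp_all add: val_simps)

definition le2 :: "nat \<times> nat \<Rightarrow> nat \<times> nat \<Rightarrow> bool" where
  "le2 p q = (fst p \<le> fst q \<and> snd p \<le> snd q)"

lemma le2_stp: "le2 p q \<Longrightarrow> le2 (stp b p) (stp b q)"
  by (cases b; cases p; cases q) (auto simp: le2_def)

lemma le2_fold: "le2 p q \<Longrightarrow> le2 (fold stp y p) (fold stp y q)"
  by (induction y arbitrary: p q) (auto simp: le2_stp)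

lemma pow_Suc: "pow_str x (Suc i) = x @ pow_str x i"
  by (simp add: pow_str_def)

lemma pow_lin: "\<exists>p q. \<forall>x y. fold stp (pow_str [True,False] i) (x,y) = (p*x+q*y, q*x+(p+q)*y)"
proof (induction i)
  case 0 then show ?case by (rule exI[of _ 1], rule exI[of _ 0]) (simp add: pow_str_def)
next
  case (Suc i)
  then obtain p q where pq: "\<forall>x y. fold stp (pow_str [True,False] i) (x,y) = (p*x+q*y, q*x+(p+q)*y)"
    by blast
  have "fold stp (pow_str [True,False] (Suc i)) (x,y) =
     ((p+q)*x+(p+2*q)*y, (p+2*q)*x+((p+q)+(p+2*q))*y)" for x y
  proof -
    have "fold stp (pow_str [True,False] (Suc i)) (x,y) = fold stp (pow_str [True,False] i) (x+y, x+y+y)"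
      by (simp add: pow_Suc)
    also have "\<dots> = (p*(x+y)+q*(x+y+y), q*(x+y)+(p+q)*(x+y+y))" using pq by blast
    also have "\<dots> = ((p+q)*x+(p+2*q)*y, (p+2*q)*x+((p+q)+(p+2*q))*y)"
      by (simp add: algebra_simps)
    finally show ?thesis .
  qed
  then show ?case by blast
qed

lemma key:
  "le2 (fold stp ([True] @ pow_str [True,False] i @ [False]) v)
       (fold stp ([True,False] @ pow_str [True,False] i) v)"
proof -
  obtain a b where v: "v = (a,b)" by (cases v)
  obtain p q where pq: "\<forall>x y. fold stp (pow_str [True,False] i) (x,y) = (p*x+q*y, q*x+(p+q)*y)"
    using pow_lin by blast
  have "fold stp ([True] @ pow_str [True,False] i @ [False]) v =
     stp False (fold stp (pow_str [True,False] i) (a+b, b))" by (simp add: v)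
  also have "\<dots> = stp False (p*(a+b)+q*b, q*(a+b)+(p+q)*b)" using pq by simp
  finally have 1: "fold stp ([True] @ pow_str [True,False] i @ [False]) v =
     (p*(a+b)+q*b, p*(a+b)+q*b + (q*(a+b)+(p+q)*b))" by simp
  have "fold stp ([True,False] @ pow_str [True,False] i) v =
     fold stp (pow_str [True,False] i) (a+b, a+b+b)" by (simp add: v)
  also have "\<dots> = (p*(a+b)+q*(a+b+b), q*(a+b)+(p+q)*(a+b+b))" using pq by blast
  finally have 2: "fold stp ([True,False] @ pow_str [True,False] i) v =
     (p*(a+b)+q*(a+b+b), q*(a+b)+(p+q)*(a+b+b))" .
  show ?thesis unfolding 1 2 le2_def fst_conv snd_conv
    by (simp add: algebra_simps)
qed

lemma val_pow_pos: "i \<ge> 1 \<Longrightarrow> val (pow_str [True,False] i) > 0"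
proof -
  assume "i \<ge> 1"
  then obtain j where "i = Suc j" by (cases i) auto
  then show ?thesis by (simp add: pow_Suc val_Cons)
qed

lemma len_pow: "length (pow_str [True,False] i) = 2*i"
  by (induction i) (auto simp: pow_str_def)

theorem mainTheorem4:
  fixes h i :: nat
  assumes "h \<in> R" and "i \<ge> 1"
  shows "\<not> sublist ([True] @ pow_str [True, False] i @ [False]) (bin h)"
proof
  let ?p = "pow_str [True, False] i"
  let ?u = "[True] @ ?p @ [False]"
  let ?u' = "[True,False] @ ?p"
  assume "sublist ?u (bin h)"
  then obtain x y where xy: "bin h = x @ ?u @ y" by (auto simp: sublist_def)
  define h' where "h' = val (x @ ?u' @ y)"
  have hv: "h = val (x @ ?u @ y)" using val_bin[of h] xy by simp
  have lenp: "length ?u' = length ?u" by simp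
  have "val ?u' < val ?u"
    using val_pow_pos[OF assms(2)] by (simp add: val_Cons val_append val_simps len_pow)
  then have "val ?u' * 2^length y < val ?u * 2^length y" by simp
  moreover have "val (?u' @ y) = val ?u' * 2^length y + val y" by (rule val_append)
  moreover have "val (?u @ y) = val ?u * 2^length y + val y" by (rule val_append)
  ultimately have vlt: "val (?u' @ y) < val (?u @ y)" by linarith
  have e1: "val (x @ (?u' @ y)) = val x * 2^length (?u' @ y) + val (?u' @ y)" by (rule val_append)
  have e2: "val (x @ (?u @ y)) = val x * 2^length (?u @ y) + val (?u @ y)" by (rule val_append)
  have e3: "length (?u' @ y) = length (?u @ y)" by simp
  have lt: "h' < h" unfolding h'_def hv e1 e2 e3 using vlt by (rule add_strict_left_mono)
  have "le2 (fold stp (x @ ?u @ y) (0,1)) (fold stp (x @ ?u' @ y) (0,1))"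
    using le2_fold[OF key[of i "fold stp x (0,1)"], of y] by simp
  then have "stern (h+1) \<le> stern (h'+1)"
    using stern_val[of "x @ ?u @ y"] stern_val[of "x @ ?u' @ y"] hv h'_def
    by (simp add: le2_def)
  moreover have "stern (h'+1) < stern (h+1)"
    using assms(1) lt by (auto simp: R_def s_seq_def)
  ultimately show False by simp
qed

end
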